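(* Let $(X,\mathcal{B},\mu,T)$ be an ergodic measure-preserving dynamical system, and suppose that $T$ has no eigenvalue of finite order other than $1$ (i.e. if $\lambda\in E_0(T)$ and $\lambda^q=1$ for some integer $q\ge1$, then $\lambda=1$). Let $f\in E_k(T)$ and $g\in E_\ell(T)$ for some integers $k,\ell\ge1$, and suppose $f$ and $g$ are not proportional (there is no constant $c$ with $f=cg$ $\mu$-a.e.). Then $\int_X f\overline{g}\,d\mu=0$.
   Context: $E_0(T)$ is the set of eigenvalues of $T$: the $\lambda\in\mathbb{C}$ for which there exists nonzero $h\in L^2(\mu)$ with $h\circ T=\lambda h$ a.e. (eigenvalues identified with constant functions); for $k\ge1$, $E_k(T)=\{h\in L^2(\mu):|h|=1\text{ a.e.},\ (h\circ T)\overline h\in E_{k-1}(T)\}$. Elements of $\bigcup_{k\ge1}E_k(T)$ are called quasi-eigenfunctions. *)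

theory Defs
  imports "HOL-Probability.Probability"
begin

definition mps :: "'a measure \<Rightarrow> ('a \<Rightarrow> 'a) \<Rightarrow> bool" where
  "mps M T \<longleftrightarrow> prob_space M \<and> T \<in> measurable M M \<and> distr M M T = M"

definition ergodic_mps :: "'a measure \<Rightarrow> ('a \<Rightarrow> 'a) \<Rightarrow> bool" where
  "ergodic_mps M T \<longleftrightarrow> mps M T \<and>
     (\<forall>A \<in> sets M. T -` A \<inter> space M = A \<longrightarrow> measure M A = 0 \<or> measure M A = 1)"

definition L2 :: "'a measure \<Rightarrow> ('a \<Rightarrow> complex) set" where
  "L2 M = {h. h \<in> borel_measurable M \<and> integrable M (\<lambda>x. (cmod (h x))\<^sup>2)}"

definition eigenvalues :: "'a measure \<Rightarrow> ('a \<Rightarrow> 'a) \<Rightarrow> complex set" where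
  "eigenvalues M T = {c. \<exists>h \<in> L2 M. \<not> (AE x in M. h x = 0) \<and>
                          (AE x in M. h (T x) = c * h x)}"

text \<open>E_k(T): E_0 = eigenvalues, identified with (a.e.) constant functions;
  E_(k+1) = unimodular h in L^2 with (h o T) * conj h in E_k.\<close>
fun E :: "'a measure \<Rightarrow> ('a \<Rightarrow> 'a) \<Rightarrow> nat \<Rightarrow> ('a \<Rightarrow> complex) set" where
  "E M T 0 = {h. h \<in> L2 M \<and> (\<exists>c \<in> eigenvalues M T. AE x in M. h x = c)}"
| "E M T (Suc k) = {h. h \<in> L2 M \<and> (AE x in M. cmod (h x) = 1) \<and>
                       (\<lambda>x. h (T x) * cnj (h x)) \<in> E M T k}"

end

theory Submission
  imports Defs
begin

fun Q :: "'a measure \<Rightarrow> ('a \<Rightarrow> 'a) \<Rightarrow> nat \<Rightarrow> ('a \<Rightarrow> complex) set" where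
  "Q M T 0 = {h. h \<in> borel_measurable M \<and> (\<exists>c. AE x in M. h x = c)}"
| "Q M T (Suc m) = {h. h \<in> borel_measurable M \<and> (AE x in M. cmod (h x) = 1) \<and>
                       (\<lambda>x. h (T x) * cnj (h x)) \<in> Q M T m}"

lemma cnj_meas[measurable (raw)]: "f \<in> borel_measurable M \<Longrightarrow> (\<lambda>x. cnj (f x)) \<in> borel_measurable M"
proof -
  assume f: "f \<in> borel_measurable M"
  have "(\<lambda>x. complex_of_real (Re (f x)) - \<i> * complex_of_real (Im (f x))) \<in> borel_measurable M" using f by measurable
  moreover have "(\<lambda>x. cnj (f x)) = (\<lambda>x. complex_of_real (Re (f x)) - \<i> * complex_of_real (Im (f x)))" by (auto simp: complex_eq_iff)
  ultimately show ?thesis by simp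
qed

lemma unit_cnj: "cmod z = 1 \<Longrightarrow> z * cnj z = 1"
  by (metis complex_norm_square mult.right_neutral of_real_1 power_one)

locale qe = prob_space M for M :: "'a measure" +
  fixes T :: "'a \<Rightarrow> 'a"
  assumes Tm[measurable]: "T \<in> measurable M M"
  and Tdistr: "distr M M T = M"
  and erg: "\<And>A. A \<in> sets M \<Longrightarrow> T -` A \<inter> space M = A \<Longrightarrow> measure M A = 0 \<or> measure M A = 1"
  and nfo: "\<And>c q. c \<in> eigenvalues M T \<Longrightarrow> q \<ge> 1 \<Longrightarrow> c ^ q = 1 \<Longrightarrow> c = 1"
begin

lemma AE_T:
  assumes "AE x in M. P x" shows "AE x in M. P (T x)"
proof -
  have "AE x in distr M M T. P x" using assms by (subst Tdistr)
  then show ?thesis by (rule AE_distrD[OF Tm])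
qed

lemma AE_Tn: "AE x in M. P x \<Longrightarrow> AE x in M. P ((T^^n) x)"
proof (induction n arbitrary: P)
  case 0 then show ?case by simp
next
  case (Suc n)
  from AE_T[OF Suc.IH[OF Suc.prems]] show ?case by (simp add: funpow_swap1)
qed

lemma ex_pt: "AE x in M. P x \<Longrightarrow> \<exists>x. P x"
  using AE_False eventually_mono by blast

lemma integral_T:
  fixes f :: "'a \<Rightarrow> complex"
  assumes "f \<in> borel_measurable M"
  shows "integral\<^sup>L M (\<lambda>x. f (T x)) = integral\<^sup>L M f"
  using integral_distr[OF Tm assms] Tdistr by simp

lemma integral_Tn:
  fixes f :: "'a \<Rightarrow> complex"
  assumes "f \<in> borel_measurable M"
  shows "integral\<^sup>L M (\<lambda>x. f ((T^^n) x)) = integral\<^sup>L M f"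
proof (induction n)
  case 0 then show ?case by simp
next
  case (Suc n)
  have m: "(\<lambda>x. f ((T^^n) x)) \<in> borel_measurable M"
    using assms measurable_compose_n[OF Tm] by measurable
  have "integral\<^sup>L M (\<lambda>x. f ((T^^Suc n) x)) = integral\<^sup>L M (\<lambda>x. f ((T^^n) (T x)))"
    by (simp add: funpow_swap1)
  also have "\<dots> = integral\<^sup>L M (\<lambda>x. f ((T^^n) x))"
    using integral_T[OF m] by simp
  finally show ?case using Suc by simp
qed

lemma inv_set:
  assumes A: "A \<in> sets M" and inv: "AE x in M. (T x \<in> A \<longleftrightarrow> x \<in> A)"
  shows "measure M A = 0 \<or> measure M A = 1"
proof -
  have n: "AE x in M. ((T^^n) x \<in> A \<longleftrightarrow> x \<in> A)" for n
  proof (induction n)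
    case 0 show ?case by simp
  next
    case (Suc n)
    from AE_T[OF Suc] inv show ?case by eventually_elim (simp add: funpow_swap1)
  qed
  hence all: "AE x in M. \<forall>n. ((T^^n) x \<in> A \<longleftrightarrow> x \<in> A)" by (simp add: AE_all_countable)
  define B where "B = {x \<in> space M. \<exists>m. \<forall>n\<ge>m. (T^^n) x \<in> A}"
  have Bs: "B \<in> sets M"
    unfolding B_def using A measurable_compose_n[OF Tm] by measurable
  have "T -` B \<inter> space M = B"
  proof (intro equalityI subsetI)
    fix x assume "x \<in> T -` B \<inter> space M"
    then have x: "x \<in> space M" "T x \<in> B" by auto
    then obtain m where m: "\<forall>n\<ge>m. (T^^n) (T x) \<in> A" unfolding B_def by auto
    have "\<forall>n\<ge>Suc m. (T^^n) x \<in> A"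
    proof (intro allI impI)
      fix n assume "Suc m \<le> n"
      then obtain k where k: "n = Suc k" "m \<le> k" by (cases n) auto
      then show "(T^^n) x \<in> A" using m by (simp add: funpow_swap1)
    qed
    then show "x \<in> B" using x unfolding B_def by blast
  next
    fix x assume x: "x \<in> B"
    then obtain m where m: "\<forall>n\<ge>m. (T^^n) x \<in> A" and xs: "x \<in> space M" unfolding B_def by auto
    have "\<forall>n\<ge>m. (T^^n) (T x) \<in> A"
    proof (intro allI impI)
      fix n assume "m \<le> n"
      then have "(T^^Suc n) x \<in> A" using m[rule_format, of "Suc n"] by simp
      then show "(T^^n) (T x) \<in> A" by (simp add: funpow_swap1)
    qed
    moreover have "T x \<in> space M" using xs measurable_space[OF Tm] by blast
    ultimately have "T x \<in> B" unfolding B_def by blast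
    then show "x \<in> T -` B \<inter> space M" using xs by simp
  qed
  hence "measure M B = 0 \<or> measure M B = 1" using erg[OF Bs] by simp
  moreover have "measure M B = measure M A"
  proof (rule measure_eq_AE[OF _ Bs A])
    show "AE x in M. (x \<in> B) = (x \<in> A)"
      using all AE_space
    proof eventually_elim
      case (elim x)
      show ?case
      proof
        assume "x \<in> B"
        then obtain m where "\<forall>n\<ge>m. (T^^n) x \<in> A" unfolding B_def by auto
        then show "x \<in> A" using elim by blast
      next
        assume "x \<in> A" then show "x \<in> B" using elim unfolding B_def by auto
      qed
    qed
  qed
  ultimately show ?thesis by simp
qed

lemma AE_set_01:
  assumes A: "A \<in> sets M" and "measure M A = 0 \<or> measure M A = 1"
  shows "AE x in M. (x \<in> A \<longleftrightarrow> measure M A = 1)"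
proof (cases "measure M A = 1")
  case True then show ?thesis using AE_prob_1[OF True] by simp
next
  case False
  then have "measure M A = 0" using assms(2) by simp
  then have "prob (space M - A) = 1" using prob_compl[OF A] by simp
  have "AE x in M. x \<in> space M - A" by (rule AE_prob_1) fact
  then show ?thesis by (rule eventually_mono) (use False in auto)
qed

lemma inv_fun_real:
  fixes \<phi> :: "'a \<Rightarrow> real"
  assumes [measurable]: "\<phi> \<in> borel_measurable M" and inv: "AE x in M. \<phi> (T x) = \<phi> x"
  shows "\<exists>c. AE x in M. \<phi> x = c"
proof -
  define A where "A q = {x\<in>space M. \<phi> x \<le> real_of_rat q}" for q
  have As: "A q \<in> sets M" for q unfolding A_def by measurable
  have "measure M (A q) = 0 \<or> measure M (A q) = 1" for q
    by (rule inv_set[OF As]) (use inv AE_space in \<open>eventually_elim, auto simp: A_def measurable_space[OF Tm]\<close>)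
  hence "AE x in M. (x \<in> A q \<longleftrightarrow> measure M (A q) = 1)" for q
    using AE_set_01[OF As] by blast
  hence all: "AE x in M. \<forall>q. (x \<in> A q \<longleftrightarrow> measure M (A q) = 1)" by (simp add: AE_all_countable)
  from ex_pt[OF AE_conjI[OF all AE_space]] obtain x0 where
    x0: "x0 \<in> space M" "\<forall>q. (x0 \<in> A q \<longleftrightarrow> measure M (A q) = 1)" by blast
  have "AE x in M. \<phi> x = \<phi> x0"
    using all AE_space
  proof eventually_elim
    case (elim x)
    show ?case
    proof (rule ccontr)
      assume ne: "\<phi> x \<noteq> \<phi> x0"
      show False
      proof (cases "\<phi> x < \<phi> x0")
        case True
        then obtain q where q: "\<phi> x < real_of_rat q" "real_of_rat q < \<phi> x0" using of_rat_dense by blast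
        have "x \<in> A q" "x0 \<notin> A q" using q elim(2) x0(1) unfolding A_def by auto
        moreover have "(x \<in> A q) = (x0 \<in> A q)" using elim x0 by simp
        ultimately show False by blast
      next
        case False
        then have "\<phi> x0 < \<phi> x" using ne by simp
        then obtain q where q: "\<phi> x0 < real_of_rat q" "real_of_rat q < \<phi> x" using of_rat_dense by blast
        have "x0 \<in> A q" "x \<notin> A q" using q elim(2) x0(1) unfolding A_def by auto
        moreover have "(x \<in> A q) = (x0 \<in> A q)" using elim x0 by simp
        ultimately show False by blast
      qed
    qed
  qed
  then show ?thesis by blast
qed

lemma inv_fun:
  fixes \<phi> :: "'a \<Rightarrow> complex"
  assumes [measurable]: "\<phi> \<in> borel_measurable M" and inv: "AE x in M. \<phi> (T x) = \<phi> x"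
  shows "\<exists>c. AE x in M. \<phi> x = c"
proof -
  have "AE x in M. Re (\<phi> (T x)) = Re (\<phi> x)" using inv by eventually_elim simp
  then obtain a where a: "AE x in M. Re (\<phi> x) = a"
    using inv_fun_real[of "\<lambda>x. Re (\<phi> x)"] by auto
  have "AE x in M. Im (\<phi> (T x)) = Im (\<phi> x)" using inv by eventually_elim simp
  then obtain b where b: "AE x in M. Im (\<phi> x) = b"
    using inv_fun_real[of "\<lambda>x. Im (\<phi> x)"] by auto
  have "AE x in M. \<phi> x = Complex a b" using a b by eventually_elim (simp add: complex_eq_iff)
  then show ?thesis by blast
qed


lemma Q_meas: "h \<in> Q M T m \<Longrightarrow> h \<in> borel_measurable M"
  by (cases m) auto

lemma Q_AE: "h \<in> Q M T m \<Longrightarrow> g \<in> borel_measurable M \<Longrightarrow> AE x in M. g x = h x \<Longrightarrow> g \<in> Q M T m"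
proof (induction m arbitrary: h g)
  case 0
  then obtain c where c: "AE x in M. h x = c" by auto
  from 0(3) c have "AE x in M. g x = c" by eventually_elim simp
  with 0 show ?case by auto
next
  case (Suc m)
  have h1: "AE x in M. cmod (h x) = 1" and hQ: "(\<lambda>x. h (T x) * cnj (h x)) \<in> Q M T m"
    using Suc.prems by auto
  have "AE x in M. cmod (g x) = 1" using h1 Suc.prems(3) by eventually_elim simp
  moreover have "(\<lambda>x. g (T x) * cnj (g x)) \<in> Q M T m"
  proof (rule Suc.IH[OF hQ])
    show "(\<lambda>x. g (T x) * cnj (g x)) \<in> borel_measurable M" using Suc.prems(2) by measurable
    show "AE x in M. g (T x) * cnj (g x) = h (T x) * cnj (h x)"
      using AE_T[OF Suc.prems(3)] Suc.prems(3) by eventually_elim simp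
  qed
  ultimately show ?case using Suc.prems(2) by simp
qed

lemma Q_T: "h \<in> Q M T m \<Longrightarrow> (\<lambda>x. h (T x)) \<in> Q M T m"
proof (induction m arbitrary: h)
  case 0
  then obtain c where c: "AE x in M. h x = c" and [measurable]: "h \<in> borel_measurable M" by auto
  have "AE x in M. h (T x) = c" using AE_T[OF c] by blast
  then show ?case by auto
next
  case (Suc m)
  have [measurable]: "h \<in> borel_measurable M" and h1: "AE x in M. cmod (h x) = 1"
    and hQ: "(\<lambda>x. h (T x) * cnj (h x)) \<in> Q M T m"
    using Suc.prems by auto
  have "(\<lambda>x. (\<lambda>x. h (T x) * cnj (h x)) (T x)) \<in> Q M T m" by (rule Suc.IH[OF hQ])
  then show ?case using AE_T[OF h1] by simp
qed

lemma Q_mult: "h1 \<in> Q M T m \<Longrightarrow> h2 \<in> Q M T m \<Longrightarrow> (\<lambda>x. h1 x * h2 x) \<in> Q M T m"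
proof (induction m arbitrary: h1 h2)
  case 0
  then obtain c1 c2 where c: "AE x in M. h1 x = c1" "AE x in M. h2 x = c2"
    and [measurable]: "h1 \<in> borel_measurable M" "h2 \<in> borel_measurable M" by auto
  from c have "AE x in M. h1 x * h2 x = c1 * c2" by eventually_elim simp
  then show ?case by auto
next
  case (Suc m)
  have [measurable]: "h1 \<in> borel_measurable M" "h2 \<in> borel_measurable M"
    and a: "AE x in M. cmod (h1 x) = 1" "AE x in M. cmod (h2 x) = 1"
    and q: "(\<lambda>x. h1 (T x) * cnj (h1 x)) \<in> Q M T m" "(\<lambda>x. h2 (T x) * cnj (h2 x)) \<in> Q M T m"
    using Suc.prems by auto
  have e: "(\<lambda>x. h1 (T x) * h2 (T x) * cnj (h1 x * h2 x)) =
      (\<lambda>x. (h1 (T x) * cnj (h1 x)) * (h2 (T x) * cnj (h2 x)))" by (auto simp: fun_eq_iff)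
  have "AE x in M. cmod (h1 x * h2 x) = 1" using a by eventually_elim (simp add: norm_mult)
  then show ?case using Suc.IH[OF q] e by simp
qed

lemma Q_cnj: "h \<in> Q M T m \<Longrightarrow> (\<lambda>x. cnj (h x)) \<in> Q M T m"
proof (induction m arbitrary: h)
  case 0
 then obtain c where c: "AE x in M. h x = c" and [measurable]: "h \<in> borel_measurable M" by auto
  from c have "AE x in M. cnj (h x) = cnj c" by eventually_elim simp
  then show ?case by auto
next
  case (Suc m)
  have [measurable]: "h \<in> borel_measurable M" and h1: "AE x in M. cmod (h x) = 1"
    and hQ: "(\<lambda>x. h (T x) * cnj (h x)) \<in> Q M T m"
    using Suc.prems by auto
  have e: "(\<lambda>x. cnj (h (T x)) * cnj (cnj (h x))) = (\<lambda>x. cnj ((\<lambda>x. h (T x) * cnj (h x)) x))"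
    by (auto simp: fun_eq_iff)
  show ?case using Suc.IH[OF hQ] h1 e by simp
qed

lemma Q_one: "(\<lambda>x. 1) \<in> Q M T m"
  by (induction m) auto

lemma Q_mono: "h \<in> Q M T (Suc m) \<Longrightarrow> h \<in> Q M T (Suc (Suc m))"
proof (induction m arbitrary: h)
  case 0
  have [measurable]: "h \<in> borel_measurable M" and h1: "AE x in M. cmod (h x) = 1"
    and hQ: "(\<lambda>x. h (T x) * cnj (h x)) \<in> Q M T 0"
    using 0 by auto
  obtain c where c: "AE x in M. h (T x) * cnj (h x) = c" using hQ by auto
  have "AE x in M. cmod (h (T x) * cnj (h x)) = 1" using h1 AE_T[OF h1]
    by eventually_elim (simp add: norm_mult)
  moreover have "AE x in M. (\<lambda>x. h (T x) * cnj (h x)) (T x) * cnj (h (T x) * cnj (h x)) = c * cnj c"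
    using c AE_T[OF c] by eventually_elim simp
  ultimately have "(\<lambda>x. h (T x) * cnj (h x)) \<in> Q M T 1" by auto
  then show ?case using h1 by simp
next
  case (Suc m)
  have a: "h \<in> borel_measurable M" "AE x in M. cmod (h x) = 1" "(\<lambda>x. h (T x) * cnj (h x)) \<in> Q M T (Suc m)"
    using Suc.prems by (simp_all only: Q.simps mem_Collect_eq)
  have "(\<lambda>x. h (T x) * cnj (h x)) \<in> Q M T (Suc (Suc m))" by (rule Suc.IH[OF a(3)])
  then show ?case using a(1,2) by (simp only: Q.simps(2)[of M T "Suc (Suc m)"] mem_Collect_eq)
qed

lemma Q_le:
  assumes "m \<le> n" "h \<in> Q M T (Suc m)" shows "h \<in> Q M T (Suc n)"
  using assms(1)
proof (induction n rule: dec_induct)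
  case base then show ?case using assms(2) .
next
  case (step n) then show ?case using Q_mono by blast
qed


lemma unit_L2:
  assumes [measurable]: "h \<in> borel_measurable M" and h1: "AE x in M. cmod (h x) = 1"
  shows "h \<in> L2 M" "\<not> (AE x in M. h x = 0)"
proof -
  have "integrable M (\<lambda>x. (cmod (h x))\<^sup>2)"
    by (rule integrable_const_bound[where B=1]) (use h1 in \<open>eventually_elim, simp\<close>, measurable)
  then show "h \<in> L2 M" by (simp add: L2_def)
  show "\<not> (AE x in M. h x = 0)"
  proof
    assume "AE x in M. h x = 0"
    with h1 have "AE x in M. False" by eventually_elim simp
    then show False using AE_False by simp
  qed
qed

lemma Q_periodic:
  "h \<in> Q M T m \<Longrightarrow> n \<ge> 1 \<Longrightarrow> AE x in M. h ((T^^n) x) = h x \<Longrightarrow> \<exists>c. AE x in M. h x = c"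
proof (induction m arbitrary: h)
  case 0 then show ?case by auto
next
  case (Suc j)
  have [measurable]: "h \<in> borel_measurable M" and h1: "AE x in M. cmod (h x) = 1"
    and hQ: "(\<lambda>x. h (T x) * cnj (h x)) \<in> Q M T j" using Suc.prems(1) by auto
  have per: "AE x in M. h ((T^^n) x) = h x" by fact
  have "AE x in M. (\<lambda>x. h (T x) * cnj (h x)) ((T^^n) x) = h (T x) * cnj (h x)"
    using AE_T[OF per] per by eventually_elim (simp add: funpow_swap1)
  then obtain c where c: "AE x in M. h (T x) * cnj (h x) = c" using Suc.IH[OF hQ Suc.prems(2)] by auto
  have e: "AE x in M. h (T x) = c * h x" using c h1
  proof eventually_elim
    case (elim x)
    have "c * h x = h (T x) * (h x * cnj (h x))" using elim(1) by (simp add: algebra_simps)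
    then show ?case using unit_cnj[OF elim(2)] by simp
  qed
  have pow: "AE x in M. h ((T^^k) x) = c^k * h x" for k
  proof (induction k)
    case 0 show ?case by simp
  next
    case (Suc k)
    from AE_Tn[OF e, of k] Suc show ?case by eventually_elim simp
  qed
  from pow[of n] per h1 have "AE x in M. c^n = 1"
  proof eventually_elim
    case (elim x)
    then have "c^n * h x = 1 * h x" by simp
    moreover have "h x \<noteq> 0" using elim(3) by auto
    ultimately show ?case by (metis mult_cancel_right)
  qed
  then have cn: "c^n = 1" using ex_pt by blast
  have "c \<in> eigenvalues M T"
    unfolding eigenvalues_def using unit_L2[OF _ h1] e by auto
  then have "c = 1" using nfo Suc.prems(2) cn by blast
  then have "AE x in M. h (T x) = h x" using e by simp
  then show ?case using inv_fun by simp
qed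


lemma orth_zero:
  fixes h :: "'a \<Rightarrow> complex"
  assumes [measurable]: "h \<in> borel_measurable M" and h1: "AE x in M. cmod (h x) = 1"
  and orth: "\<And>n. n \<ge> 1 \<Longrightarrow> integral\<^sup>L M (\<lambda>x. h ((T^^n) x) * cnj (h x)) = 0"
  shows "integral\<^sup>L M h = 0"
proof -
  define v where "v a = (\<lambda>x. h ((T^^a) x))" for a
  have vm[measurable]: "v a \<in> borel_measurable M" for a
    unfolding v_def using measurable_compose_n[OF Tm] by measurable
  have v1: "AE x in M. \<forall>a. cmod (v a x) = 1"
    unfolding AE_all_countable v_def using AE_Tn[OF h1] by blast
  have vint: "integrable M (\<lambda>x. v a x * cnj (v b x))" for a b
    by (rule integrable_const_bound[where B=1]) (use v1 in \<open>eventually_elim, simp add: norm_mult\<close>, measurable)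
  have vint1: "integrable M (v a)" for a
    by (rule integrable_const_bound[where B=1]) (use v1 in \<open>eventually_elim, simp\<close>, measurable)
  have ip: "integral\<^sup>L M (\<lambda>x. v a x * cnj (v b x)) = (if a = b then 1 else 0)" for a b
  proof -
    have lt: "integral\<^sup>L M (\<lambda>x. v a x * cnj (v b x)) = 0" if "b < a" for a b
    proof -
      define d where "d = a - b"
      have d: "d \<ge> 1" "a = d + b" using that d_def by auto
      have [measurable]: "(\<lambda>y. h ((T^^d) y) * cnj (h y)) \<in> borel_measurable M"
        using measurable_compose_n[OF Tm] by measurable
      have "(\<lambda>x. v a x * cnj (v b x)) = (\<lambda>x. (\<lambda>y. h ((T^^d) y) * cnj (h y)) ((T^^b) x))"
        unfolding v_def d(2) by (simp add: funpow_add)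
      then have "integral\<^sup>L M (\<lambda>x. v a x * cnj (v b x)) = integral\<^sup>L M (\<lambda>y. h ((T^^d) y) * cnj (h y))"
        using integral_Tn[of "\<lambda>y. h ((T^^d) y) * cnj (h y)" b] by simp
      then show ?thesis using orth[OF d(1)] by simp
    qed
    show ?thesis
    proof (cases a b rule: linorder_cases)
      case less
      have "integral\<^sup>L M (\<lambda>x. v a x * cnj (v b x)) = integral\<^sup>L M (\<lambda>x. cnj (v b x * cnj (v a x)))" by (simp add: mult.commute)
      also have "\<dots> = cnj (integral\<^sup>L M (\<lambda>x. v b x * cnj (v a x)))" using Bochner_Integration.integral_cnj[of M "\<lambda>x. v b x * cnj (v a x)"] by simp
      also have "\<dots> = 0" using lt[OF less] by simp
      finally show ?thesis using less by simp
    next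
      case equal
      have "AE x in M. v a x * cnj (v a x) = 1" using v1 by eventually_elim (simp add: unit_cnj)
      then have "integral\<^sup>L M (\<lambda>x. v a x * cnj (v a x)) = integral\<^sup>L M (\<lambda>x. 1)"
        by (intro integral_cong_AE) auto
      then show ?thesis using equal prob_space by simp
    next
      case greater then show ?thesis using lt by simp
    qed
  qed
  show ?thesis
  proof (rule ccontr)
    assume ne: "integral\<^sup>L M h \<noteq> 0"
    define a where "a = cmod (integral\<^sup>L M h)"
    have apos: "a > 0" using ne a_def by simp
    obtain N :: nat where N: "1 / a^2 < real N" using reals_Archimedean2 by blast
    have a2: "a^2 > 0" using apos by simp
    have Na: "1 < real N * a^2" using N a2 by (simp add: divide_less_eq)
    define S where "S x = (\<Sum>i<N. v i x)" for x
    have Sm[measurable]: "S \<in> borel_measurable M" unfolding S_def by measurable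
    have Sb: "AE x in M. norm (cmod (S x)) \<le> real N" using v1
    proof eventually_elim
      case (elim x)
      have "cmod (S x) \<le> (\<Sum>i<N. cmod (v i x))" unfolding S_def by (rule norm_sum)
      then show ?case using elim by simp
    qed
    have Sb2: "AE x in M. norm ((cmod (S x))\<^sup>2) \<le> real N ^ 2" using Sb
    proof eventually_elim
      case (elim x)
      then show ?case by (simp add: power_mono)
    qed
    have iS1: "integrable M (\<lambda>x. cmod (S x))"
      by (rule integrable_const_bound[OF Sb]) measurable
    have iS2: "integrable M (\<lambda>x. (cmod (S x))\<^sup>2)"
      by (rule integrable_const_bound[OF Sb2]) measurable
    have intS: "integral\<^sup>L M S = of_nat N * integral\<^sup>L M h"
    proof -
      have "integral\<^sup>L M S = (\<Sum>i<N. integral\<^sup>L M (v i))"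
        unfolding S_def by (rule Bochner_Integration.integral_sum) (rule vint1)
      also have "\<dots> = (\<Sum>i<N. integral\<^sup>L M h)"
        unfolding v_def using integral_Tn[of h] by simp
      finally show ?thesis by simp
    qed
    have "integral\<^sup>L M (\<lambda>x. S x * cnj (S x)) = integral\<^sup>L M (\<lambda>x. \<Sum>i<N. \<Sum>j<N. v i x * cnj (v j x))"
      unfolding S_def by (simp add: sum_product)
    also have "\<dots> = (\<Sum>i<N. \<Sum>j<N. integral\<^sup>L M (\<lambda>x. v i x * cnj (v j x)))"
      by (simp add: Bochner_Integration.integral_sum vint)
    also have "\<dots> = of_nat N" using ip by simp
    finally have A: "integral\<^sup>L M (\<lambda>x. S x * cnj (S x)) = of_nat N" .
    have eq: "(\<lambda>x. S x * cnj (S x)) = (\<lambda>x. complex_of_real ((cmod (S x))\<^sup>2))"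
      by (rule ext) (rule complex_norm_square[symmetric])
    have "complex_of_real (integral\<^sup>L M (\<lambda>x. (cmod (S x))\<^sup>2)) = (of_nat N :: complex)"
      unfolding Bochner_Integration.integral_complex_of_real[symmetric] eq[symmetric] by (rule A)
    then have sq: "integral\<^sup>L M (\<lambda>x. (cmod (S x))\<^sup>2) = real N"
      by (metis of_real_eq_iff of_real_of_nat_eq)
    have var: "(integral\<^sup>L M (\<lambda>x. cmod (S x)))\<^sup>2 \<le> integral\<^sup>L M (\<lambda>x. (cmod (S x))\<^sup>2)"
      using variance_positive[of "\<lambda>x. cmod (S x)"] variance_eq[OF iS1 iS2] by simp
    have nb: "cmod (integral\<^sup>L M S) \<le> integral\<^sup>L M (\<lambda>x. cmod (S x))" by (rule integral_norm_bound)
    have "cmod (integral\<^sup>L M S) = real N * a" unfolding intS a_def by (simp add: norm_mult)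
    then have le1: "real N * a \<le> integral\<^sup>L M (\<lambda>x. cmod (S x))" using nb by simp
    have nn: "0 \<le> real N * a" using apos by simp
    have "(real N * a)\<^sup>2 \<le> (integral\<^sup>L M (\<lambda>x. cmod (S x)))\<^sup>2" by (rule power_mono[OF le1 nn])
    then have "(real N * a)\<^sup>2 \<le> real N" using var sq by linarith
    then have "real N * (real N * a^2) \<le> real N * 1" by (simp add: power2_eq_square algebra_simps)
    moreover have "real N > 0"
    proof (rule ccontr)
      assume "\<not> real N > 0" then have "real N = 0" by simp
      then show False using Na by simp
    qed
    ultimately have "real N * a^2 \<le> 1" by (simp only: mult_le_cancel_left_pos)
    then show False using Na by simp
  qed
qed

lemma Q_int: "h \<in> Q M T m \<Longrightarrow> \<not> (\<exists>c. AE x in M. h x = c) \<Longrightarrow> integral\<^sup>L M h = 0"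
proof (induction m arbitrary: h)
  case 0 then show ?case by auto
next
  case (Suc j)
  have [measurable]: "h \<in> borel_measurable M" and h1: "AE x in M. cmod (h x) = 1"
    and hQ: "(\<lambda>x. h (T x) * cnj (h x)) \<in> Q M T j" using Suc.prems(1) by auto
  define u where "u n = (\<lambda>x. h ((T^^n) x) * cnj (h x))" for n
  have um: "u n \<in> borel_measurable M" for n
    unfolding u_def using measurable_compose_n[OF Tm] by measurable
  have uQ: "u n \<in> Q M T j" for n
  proof (induction n)
    case 0
    have "AE x in M. u 0 x = 1" unfolding u_def using h1 by eventually_elim (simp add: unit_cnj)
    then show ?case using Q_AE[OF Q_one um] by simp
  next
    case (Suc n)
    have "(\<lambda>x. u n (T x) * (h (T x) * cnj (h x))) \<in> Q M T j" by (rule Q_mult[OF Q_T[OF Suc] hQ])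
    moreover have "AE x in M. u (Suc n) x = u n (T x) * (h (T x) * cnj (h x))"
      using AE_T[OF h1]
    proof eventually_elim
      case (elim x)
      have 1: "cnj (h (T x)) * h (T x) = 1" using unit_cnj[OF elim] by (simp add: mult.commute)
      have "u n (T x) * (h (T x) * cnj (h x)) = h ((T^^n) (T x)) * cnj (h x) * (cnj (h (T x)) * h (T x))"
        unfolding u_def by (simp add: algebra_simps)
      also have "\<dots> = u (Suc n) x" unfolding 1 u_def by (simp add: funpow_swap1)
      finally show ?case by simp
    qed
    ultimately show ?case using Q_AE um by blast
  qed
  show ?case
  proof (cases "\<exists>n\<ge>1. \<exists>c. AE x in M. u n x = c")
    case True
    then obtain n c where n: "n \<ge> 1" and c: "AE x in M. u n x = c" by auto
    have hn: "AE x in M. h ((T^^n) x) = c * h x" using c h1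
    proof eventually_elim
      case (elim x)
      have "c * h x = h ((T^^n) x) * (h x * cnj (h x))" using elim(1) unfolding u_def by (simp add: algebra_simps)
      then show ?case using unit_cnj[OF elim(2)] by simp
    qed
    have "AE x in M. cmod c = 1" using hn h1 AE_Tn[OF h1, of n]
    proof eventually_elim
      case (elim x)
      then have "cmod c * cmod (h x) = 1" by (metis norm_mult)
      then show ?case using elim by simp
    qed
    then have cc: "c * cnj c = 1" using ex_pt unit_cnj by blast
    have "AE x in M. (\<lambda>x. h (T x) * cnj (h x)) ((T^^n) x) = h (T x) * cnj (h x)"
      using AE_T[OF hn] hn
    proof eventually_elim
      case (elim x)
      have "(\<lambda>x. h (T x) * cnj (h x)) ((T^^n) x) = c * h (T x) * cnj (c * h x)"
        using elim by (simp add: funpow_swap1)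
      also have "\<dots> = (c * cnj c) * (h (T x) * cnj (h x))" by (simp add: ac_simps)
      finally show ?case using cc by simp
    qed
    then obtain c' where c': "AE x in M. h (T x) * cnj (h x) = c'" using Q_periodic[OF hQ n] by auto
    have e: "AE x in M. h (T x) = c' * h x" using c' h1
    proof eventually_elim
      case (elim x)
      have "c' * h x = h (T x) * (h x * cnj (h x))" using elim(1) by (simp add: algebra_simps)
      then show ?case using unit_cnj[OF elim(2)] by simp
    qed
    show ?thesis
    proof (cases "c' = 1")
      case True
      then have "AE x in M. h (T x) = h x" using e by simp
      then show ?thesis using inv_fun Suc.prems(2) by auto
    next
      case False
      have "integral\<^sup>L M h = integral\<^sup>L M (\<lambda>x. h (T x))" using integral_T by simp
      also have "\<dots> = integral\<^sup>L M (\<lambda>x. c' * h x)" by (rule integral_cong_AE) (use e in auto)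
      also have "\<dots> = c' * integral\<^sup>L M h" by simp
      finally have "(1 - c') * integral\<^sup>L M h = 0" by (simp add: algebra_simps)
      then show ?thesis using False by simp
    qed
  next
    case False
    have "integral\<^sup>L M (\<lambda>x. h ((T^^n) x) * cnj (h x)) = 0" if "n \<ge> 1" for n
      using Suc.IH[OF uQ[of n]] False that unfolding u_def by blast
    then show ?thesis by (rule orth_zero[OF _ h1, rotated]) measurable
  qed
qed

end

lemma E_Q: "h \<in> E M T m \<Longrightarrow> h \<in> Q M T m"
  by (induction m arbitrary: h) (auto simp: L2_def)


theorem proposition2p1:
  fixes M :: "'a measure" and T :: "'a \<Rightarrow> 'a"
    and f g :: "'a \<Rightarrow> complex" and k l :: nat
  assumes erg: "ergodic_mps M T"
    and no_finite_order: "\<And>c q. c \<in> eigenvalues M T \<Longrightarrow> q \<ge> 1 \<Longrightarrow> c ^ q = 1 \<Longrightarrow> c = 1"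
    and k: "k \<ge> 1" and l: "l \<ge> 1"
    and f: "f \<in> E M T k" and g: "g \<in> E M T l"
    and not_prop: "\<not> (\<exists>c::complex. AE x in M. f x = c * g x)"
  shows "(LINT x|M. f x * cnj (g x)) = 0"
proof -
  have mps: "prob_space M" "T \<in> measurable M M" "distr M M T = M"
    using erg unfolding ergodic_mps_def mps_def by auto
  have ergA: "\<And>A. A \<in> sets M \<Longrightarrow> T -` A \<inter> space M = A \<Longrightarrow> measure M A = 0 \<or> measure M A = 1"
    using erg unfolding ergodic_mps_def by auto
  interpret qe M T
  proof (intro qe.intro qe_axioms.intro mps)
    show "\<And>A. A \<in> sets M \<Longrightarrow> T -` A \<inter> space M = A \<Longrightarrow> measure M A = 0 \<or> measure M A = 1"
      using ergA by blast
    show "\<And>c q. c \<in> eigenvalues M T \<Longrightarrow> q \<ge> 1 \<Longrightarrow> c ^ q = 1 \<Longrightarrow> c = 1"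
      using no_finite_order by blast
  qed
  obtain k' where k': "k = Suc k'" using k by (cases k) auto
  obtain l' where l': "l = Suc l'" using l by (cases l) auto
  have fQ: "f \<in> Q M T (Suc (max k' l'))"
    using Q_le[of k' "max k' l'" f] E_Q[OF f] k' by simp
  have gQ: "g \<in> Q M T (Suc (max k' l'))"
    using Q_le[of l' "max k' l'" g] E_Q[OF g] l' by simp
  have hQ: "(\<lambda>x. f x * cnj (g x)) \<in> Q M T (Suc (max k' l'))"
    by (rule Q_mult[OF fQ Q_cnj[OF gQ]])
  have g1: "AE x in M. cmod (g x) = 1" using gQ by simp
  have nc: "\<not> (\<exists>c. AE x in M. f x * cnj (g x) = c)"
  proof
    assume "\<exists>c. AE x in M. f x * cnj (g x) = c"
    then obtain c where c: "AE x in M. f x * cnj (g x) = c" by blast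
    have "AE x in M. f x = c * g x" using c g1
    proof eventually_elim
      case (elim x)
      have "c * g x = f x * (g x * cnj (g x))" using elim(1) by (simp add: algebra_simps)
      then show ?case using unit_cnj[OF elim(2)] by simp
    qed
    then show False using not_prop by blast
  qed
  show ?thesis using Q_int[OF hQ nc] .
qed

end
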